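(* Let $H=(V,E,C,\ell)$ be an edge-colored graph (every edge contains exactly two nodes), let $x$ be a feasible solution of the \textsc{MinECC} LP relaxation with $x_e=\max_{v\in e}x_v^{\ell(e)}$, and let $Y$ be the output of GenColorRound applied to $x$ with interval $I=(\frac12,\frac78)$. If $e\in E$ satisfies $x_e\notin(\frac18,\frac34)$, then $\Pr[e\in\mathcal M_Y]\le\frac43 x_e$.
   Context: An edge-colored hypergraph is $H=(V,E,C,\ell)$ with node set $V$, a multiset $E$ of nonempty subsets of $V$, colors $C=[k]$, $\ell\colon E\to C$, weights $w_e\ge0$. A node coloring $Y\colon V\to C$ makes a mistake at $e$ ($e\in\mathcal M_Y$) if some $v\in e$ has $Y[v]\ne\ell(e)$. The \textsc{MinECC} LP relaxation: minimize $\sum_e w_e x_e$ subject to $\sum_{i=1}^k x_v^i=k-1$ for all $v$; $x_e\ge x_v^{\ell(e)}$ for $v\in e$; $0\le x_v^i\le1$; $0\le x_e\le1$. GenColorRound with interval $I$, applied to a feasible LP solution $x$: draw $\rho$ uniformly from $I$ and, independently, a uniformly random permutation $\pi$ of $[k]$; let $S_i=\{v: x_v^i<\rho\}$ (color $i$ wants $v$ if $x_v^i<\rho$); for $v\in\bigcup_iS_i$ set $Y[v]=\pi(j)$ with $j$ the largest index such that $v\in S_{\pi(j)}$; other nodes get an arbitrary color. *)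

theory Defs
  imports "HOL-Probability.Probability"
begin

text \<open>Edge-colored hypergraph with node set V, edge index set Es (edges form a multiset,
  so they are indexed), edge map ends, colors {1..k}, edge colors lab, weights w.\<close>

definition edge_colored_hypergraph ::
  "'v set \<Rightarrow> 'e set \<Rightarrow> ('e \<Rightarrow> 'v set) \<Rightarrow> nat \<Rightarrow> ('e \<Rightarrow> nat) \<Rightarrow> ('e \<Rightarrow> real) \<Rightarrow> bool" where
  "edge_colored_hypergraph V Es ends k lab w \<longleftrightarrow>
     finite V \<and> finite Es \<and>
     (\<forall>e\<in>Es. ends e \<noteq> {} \<and> ends e \<subseteq> V \<and> lab e \<in> {1..k} \<and> w e \<ge> 0)"

definition is_graph :: "'e set \<Rightarrow> ('e \<Rightarrow> 'v set) \<Rightarrow> bool" where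
  "is_graph Es ends \<longleftrightarrow> (\<forall>e\<in>Es. card (ends e) = 2)"

text \<open>Feasibility for the MinECC LP relaxation; x v i is x_v^i, xe e is x_e.\<close>
definition minecc_lp_feasible ::
  "'v set \<Rightarrow> 'e set \<Rightarrow> ('e \<Rightarrow> 'v set) \<Rightarrow> nat \<Rightarrow> ('e \<Rightarrow> nat)
   \<Rightarrow> ('v \<Rightarrow> nat \<Rightarrow> real) \<Rightarrow> ('e \<Rightarrow> real) \<Rightarrow> bool" where
  "minecc_lp_feasible V Es ends k lab x xe \<longleftrightarrow>
     (\<forall>v\<in>V. (\<Sum>i\<in>{1..k}. x v i) = real k - 1) \<and>
     (\<forall>e\<in>Es. \<forall>v\<in>ends e. xe e \<ge> x v (lab e)) \<and>
     (\<forall>v\<in>V. \<forall>i\<in>{1..k}. 0 \<le> x v i \<and> x v i \<le> 1) \<and>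
     (\<forall>e\<in>Es. 0 \<le> xe e \<and> xe e \<le> 1)"

text \<open>Color i wants v iff x v i < rho; v gets \<sigma> j for the largest j with v in S_(\<sigma> j);
  nodes wanted by no color get the (arbitrary) color dflt v.\<close>
definition gen_color_round ::
  "nat \<Rightarrow> ('v \<Rightarrow> nat \<Rightarrow> real) \<Rightarrow> ('v \<Rightarrow> nat) \<Rightarrow> real \<Rightarrow> (nat \<Rightarrow> nat) \<Rightarrow> 'v \<Rightarrow> nat" where
  "gen_color_round k x dflt rho \<sigma> v =
     (if \<exists>j\<in>{1..k}. x v (\<sigma> j) < rho
      then \<sigma> (GREATEST j. j \<in> {1..k} \<and> x v (\<sigma> j) < rho)
      else dflt v)"

definition mistake :: "('e \<Rightarrow> 'v set) \<Rightarrow> ('e \<Rightarrow> nat) \<Rightarrow> ('v \<Rightarrow> nat) \<Rightarrow> 'e \<Rightarrow> bool" where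
  "mistake ends lab Y e \<longleftrightarrow> (\<exists>v\<in>ends e. Y v \<noteq> lab e)"

definition prob_mistake ::
  "nat \<Rightarrow> ('v \<Rightarrow> nat \<Rightarrow> real) \<Rightarrow> ('v \<Rightarrow> nat) \<Rightarrow> real \<Rightarrow> real
   \<Rightarrow> ('e \<Rightarrow> 'v set) \<Rightarrow> ('e \<Rightarrow> nat) \<Rightarrow> 'e \<Rightarrow> real" where
  "prob_mistake k x dflt a b ends lab e =
     measure_pmf.expectation (pmf_of_set {\<sigma>. \<sigma> permutes {1..k}})
       (\<lambda>\<sigma>. measure (uniform_measure lborel {a<..<b})
               {rho. mistake ends lab (gen_color_round k x dflt rho \<sigma>) e})"

end

theory Submission
  imports Defs
begin

lemma exp_le:
  assumes "finite S" "S \<noteq> {}" "\<And>s. s \<in> S \<Longrightarrow> f s \<le> (b::real)"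
  shows "measure_pmf.expectation (pmf_of_set S) f \<le> b"
proof -
  have "measure_pmf.expectation (pmf_of_set S) f = sum f S / card S"
    using assms by (simp add: integral_pmf_of_set)
  also have "\<dots> \<le> (card S * b) / card S"
    using assms sum_bounded_above[of S f b] by (intro divide_right_mono) auto
  also have "\<dots> = b" using assms by simp
  finally show ?thesis .
qed

lemma unif_le1: "measure (uniform_measure lborel {(1/2::real)<..<7/8}) B \<le> 1"
proof -
  have "prob_space (uniform_measure lborel {(1/2::real)<..<7/8})"
    by (rule prob_space_uniform_measure) auto
  then show ?thesis by (rule prob_space.prob_le_1)
qed

lemma unif_0:
  assumes "B \<inter> {(1/2::real)<..<7/8} = {}"
  shows "measure (uniform_measure lborel {(1/2::real)<..<7/8}) B = 0"
proof (cases "B \<in> sets lborel")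
  case True
  then show ?thesis using assms by (subst measure_uniform_measure) (auto simp: Int_commute)
next
  case False
  then show ?thesis by (intro measure_notin_sets) simp
qed

theorem lemma2:
  fixes V :: "'v set" and Es :: "'e set" and ends :: "'e \<Rightarrow> 'v set"
    and k :: nat and lab :: "'e \<Rightarrow> nat" and w :: "'e \<Rightarrow> real"
    and x :: "'v \<Rightarrow> nat \<Rightarrow> real" and xe :: "'e \<Rightarrow> real"
    and dflt :: "'v \<Rightarrow> nat" and e :: 'e
  assumes "edge_colored_hypergraph V Es ends k lab w"
    and "is_graph Es ends"
    and "minecc_lp_feasible V Es ends k lab x xe"
    and "\<forall>f\<in>Es. xe f = Max ((\<lambda>v. x v (lab f)) ` ends f)"
    and "\<forall>v. dflt v \<in> {1..k}"
    and "e \<in> Es"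
    and "xe e \<notin> {1/8<..<3/4}"
  shows "prob_mistake k x dflt (1/2) (7/8) ends lab e \<le> 4/3 * xe e"
proof -
  define S where "S = {\<sigma>. \<sigma> permutes {1..k::nat}}"
  have Sf1: "finite S" unfolding S_def
    using finite_permutations[of "{1..k}"] by simp
  have Sf2: "S \<noteq> {}" unfolding S_def
    using permutes_id[of "{1..k::nat}"] by (metis empty_Collect_eq)
  note Sf = Sf1 Sf2
  define c where "c = lab e"
  have c: "c \<in> {1..k}" and EV: "ends e \<subseteq> V"
    using assms(1,6) unfolding edge_colored_hypergraph_def c_def by auto
  have F: "\<forall>v\<in>V. (\<Sum>i\<in>{1..k}. x v i) = real k - 1"
    "\<forall>v\<in>ends e. xe e \<ge> x v c"
    "\<forall>v\<in>V. \<forall>i\<in>{1..k}. 0 \<le> x v i \<and> x v i \<le> 1"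
    "0 \<le> xe e"
    using assms(3,6) unfolding minecc_lp_feasible_def c_def by auto
  show ?thesis
  proof (cases "xe e \<ge> 3/4")
    case True
    have "prob_mistake k x dflt (1/2) (7/8) ends lab e \<le> 1"
      unfolding prob_mistake_def S_def[symmetric]
      by (rule exp_le[OF Sf]) (simp add: unif_le1)
    then show ?thesis using True by linarith
  next
    case False
    then have small: "xe e \<le> 1/8" using assms(7) by auto
    have big: "x u i \<ge> 7/8" if u: "u \<in> ends e" and i: "i \<in> {1..k}" "i \<noteq> c" for u i
    proof -
      have uV: "u \<in> V" using u EV by auto
      have xc: "x u c \<le> 1/8" using F(2) u small by force
      have s1: "(\<Sum>j\<in>{1..k}. x u j) = x u c + (\<Sum>j\<in>{1..k} - {c}. x u j)"
        using c by (simp add: sum.remove)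
      have s2: "(\<Sum>j\<in>{1..k} - {c}. x u j) = x u i + (\<Sum>j\<in>{1..k} - {c} - {i}. x u j)"
        using i by (intro sum.remove) auto
      have s3: "{1..k} - {c} - {i} = {1..k} - {c,i}" by auto
      have "(\<Sum>j\<in>{1..k}. x u j) = x u c + (x u i + (\<Sum>j\<in>{1..k} - {c,i}. x u j))"
        using s1 s2 s3 by simp
      moreover have "(\<Sum>j\<in>{1..k} - {c,i}. x u j) \<le> real (card ({1..k} - {c,i})) * 1"
        using F(3) uV by (intro sum_bounded_above) auto
      moreover have "card ({1..k} - {c,i}) = k - 2"
        using c i by (subst card_Diff_subset) auto
      moreover have "k \<ge> 2" using c i by auto
      ultimately show ?thesis using F(1) uV xc by (simp add: of_nat_diff)
    qed
    have "prob_mistake k x dflt (1/2) (7/8) ends lab e \<le> 0"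
      unfolding prob_mistake_def S_def[symmetric]
    proof (rule exp_le[OF Sf], rule eq_refl[OF unif_0])
      fix \<sigma> assume "\<sigma> \<in> S"
      then have sp: "\<sigma> permutes {1..k}" by (simp add: S_def)
      show "{rho. mistake ends lab (gen_color_round k x dflt rho \<sigma>) e} \<inter> {1 / 2<..<7 / 8} = {}"
      proof (rule ccontr)
        assume "\<not> ?thesis"
        then obtain rho u where r: "1/2 < rho" "rho < 7/8" and u: "u \<in> ends e"
          and ne: "gen_color_round k x dflt rho \<sigma> u \<noteq> c"
          unfolding mistake_def c_def by auto
        define j0 where "j0 = inv \<sigma> c"
        have j0: "j0 \<in> {1..k}" "\<sigma> j0 = c" unfolding j0_def
          using sp c permutes_inv_eq permutes_in_image permutes_inv by metis+
        have "x u c \<le> 1/8" using F(2) u small by force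
        then have ex: "\<exists>j\<in>{1..k}. x u (\<sigma> j) < rho"
          using j0 r by (intro bexI[of _ j0]) auto
        define P where "P = (\<lambda>j. j \<in> {1..k} \<and> x u (\<sigma> j) < rho)"
        define G where "G = (GREATEST j. P j)"
        have PG: "P G" unfolding G_def
        proof (rule GreatestI_ex_nat[where b=k])
          show "\<exists>j. P j" using ex unfolding P_def by blast
          show "\<And>y. P y \<Longrightarrow> y \<le> k" unfolding P_def by simp
        qed
        then have g1: "G \<in> {1..k}" and g2: "x u (\<sigma> G) < rho"
          unfolding P_def by auto
        have sG: "\<sigma> G \<in> {1..k}" using g1 sp permutes_in_image by metis
        have eqc: "\<sigma> G = c"
        proof (rule ccontr)
          assume "\<sigma> G \<noteq> c"
          then have "x u (\<sigma> G) \<ge> 7/8" using big[OF u sG] by blast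
          then show False using g2 r by linarith
        qed
        have "gen_color_round k x dflt rho \<sigma> u = \<sigma> G"
          unfolding gen_color_round_def G_def P_def using ex by simp
        then show False using ne eqc by simp
      qed
    qed
    then show ?thesis using F(4) by linarith
  qed
qed

end
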